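(* Let $\varphi$ be a read-once Boolean formula over the variables $x_1,\dots,x_n$ (each variable occurs exactly once), built from the unary operator $\neg$ and the binary operators $\wedge,\vee,\oplus$, and fix a truth assignment to $x_1,\dots,x_n$. Let $r$ be the root of the parse tree of $\varphi$. Then $\mathrm{DEPENDS}(r)$, defined below, equals the smallest number of variables of $\varphi$ whose values must be changed in order to change the value of $\varphi$.
   Context: The parse tree of $\varphi$ has the variables as leaves and the operator occurrences (gates) as internal nodes; under the fixed assignment every node $g$ has a Boolean value (the value of the subformula rooted at $g$). For an internal node $g$ with $g=g_l\circ g_r$, $\circ\in\{\wedge,\vee,\oplus\}$, define $\mathcal{I}(g)$ as follows, in this order of priority: $\mathcal{I}(g)=\text{Either}$ if negating the value of $g_l$ alone changes the value of $g$ and negating the value of $g_r$ alone changes the value of $g$; otherwise $\mathcal{I}(g)=\text{Left}$ if negating the value of $g_l$ alone changes the value of $g$; otherwise $\mathcal{I}(g)=\text{Right}$ if negating the value of $g_r$ alone changes the value of $g$; otherwise $\mathcal{I}(g)=\text{Both}$ (negating both values changes $g$). For $g=\neg g_l$, $\mathcal{I}(g)=\text{Pass}$. The recursive procedure $\mathrm{DEPENDS}$ assigns to each node $g$ an integer $\mathrm{deps}(g)$ and returns it: if $g$ is a leaf, $\mathrm{deps}(g)=1$; otherwise, with $d_l=\mathrm{DEPENDS}(g_l)$ and $d_r=\mathrm{DEPENDS}(g_r)$ (only $d_l$ when $g=\neg g_l$), $\mathrm{deps}(g)=d_l+d_r$ if $\mathcal{I}(g)=\text{Both}$, $\min\{d_l,d_r\}$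 if Either, $d_l$ if Left, $d_r$ if Right, and $d_l$ if Pass. *)

theory Defs
  imports Main
begin

datatype binop = AndOp | OrOp | XorOp

datatype 'a form = Var 'a | Neg "'a form" | Bin binop "'a form" "'a form"

fun apply_op :: "binop \<Rightarrow> bool \<Rightarrow> bool \<Rightarrow> bool" where
  "apply_op AndOp a b = (a \<and> b)"
| "apply_op OrOp a b = (a \<or> b)"
| "apply_op XorOp a b = (a \<noteq> b)"

fun eval :: "('a \<Rightarrow> bool) \<Rightarrow> 'a form \<Rightarrow> bool" where
  "eval \<sigma> (Var x) = \<sigma> x"
| "eval \<sigma> (Neg f) = (\<not> eval \<sigma> f)"
| "eval \<sigma> (Bin op l r) = apply_op op (eval \<sigma> l) (eval \<sigma> r)"

fun vars :: "'a form \<Rightarrow> 'a list" where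
  "vars (Var x) = [x]"
| "vars (Neg f) = vars f"
| "vars (Bin op l r) = vars l @ vars r"

definition read_once :: "'a form \<Rightarrow> bool" where
  "read_once \<phi> \<longleftrightarrow> distinct (vars \<phi>)"

datatype influence = Either | Left | Right | Both | Pass

definition infl :: "binop \<Rightarrow> bool \<Rightarrow> bool \<Rightarrow> influence" where
  "infl op a b =
    (let cl = (apply_op op (\<not> a) b \<noteq> apply_op op a b);
         cr = (apply_op op a (\<not> b) \<noteq> apply_op op a b)
     in if cl \<and> cr then Either else if cl then Left else if cr then Right else Both)"

fun depends :: "('a \<Rightarrow> bool) \<Rightarrow> 'a form \<Rightarrow> nat" where
  "depends \<sigma> (Var x) = 1"
| "depends \<sigma> (Neg f) = depends \<sigma> f"
| "depends \<sigma> (Bin op l r) =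
    (let dl = depends \<sigma> l; dr = depends \<sigma> r in
     (case infl op (eval \<sigma> l) (eval \<sigma> r) of
        Both \<Rightarrow> dl + dr
      | Either \<Rightarrow> min dl dr
      | Left \<Rightarrow> dl
      | Right \<Rightarrow> dr
      | Pass \<Rightarrow> dl))"

definition flip :: "('a \<Rightarrow> bool) \<Rightarrow> 'a set \<Rightarrow> 'a \<Rightarrow> bool" where
  "flip \<sigma> S = (\<lambda>x. if x \<in> S then \<not> \<sigma> x else \<sigma> x)"

definition min_flip :: "('a \<Rightarrow> bool) \<Rightarrow> 'a form \<Rightarrow> nat" where
  "min_flip \<sigma> \<phi> = (LEAST k. \<exists>S. S \<subseteq> set (vars \<phi>) \<and> card S = k \<and>
                                eval (flip \<sigma> S) \<phi> \<noteq> eval \<sigma> \<phi>)"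

end

theory Submission
  imports Defs
begin

lemma eval_cong: "(\<forall>x\<in>set (vars \<phi>). \<sigma> x = \<tau> x) \<Longrightarrow> eval \<sigma> \<phi> = eval \<tau> \<phi>"
  by (induction \<phi>) auto

lemma flip_restrict: "eval (flip \<sigma> S) \<phi> = eval (flip \<sigma> (S \<inter> set (vars \<phi>))) \<phi>"
  by (rule eval_cong) (auto simp: flip_def)

lemma flip_same: "S \<inter> set (vars \<phi>) = T \<inter> set (vars \<phi>) \<Longrightarrow> eval (flip \<sigma> S) \<phi> = eval (flip \<sigma> T) \<phi>"
  by (rule eval_cong) (auto simp: flip_def)

lemma flip_empty[simp]: "flip \<sigma> {} = \<sigma>"
  by (auto simp: flip_def)

lemma b1: "apply_op op a' b' \<noteq> apply_op op a b \<Longrightarrow> a' \<noteq> a \<or> b' \<noteq> b"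
  by (cases op; cases a; cases b; cases a'; cases b') auto
lemma b2: "infl op a b = Both \<Longrightarrow> apply_op op a' b' \<noteq> apply_op op a b \<Longrightarrow> a' \<noteq> a \<and> b' \<noteq> b"
  by (cases op; cases a; cases b; cases a'; cases b') (auto simp: infl_def)
lemma b3: "infl op a b = Left \<Longrightarrow> apply_op op a' b' \<noteq> apply_op op a b \<Longrightarrow> a' \<noteq> a"
  by (cases op; cases a; cases b; cases a'; cases b') (auto simp: infl_def)
lemma b4: "infl op a b = Right \<Longrightarrow> apply_op op a' b' \<noteq> apply_op op a b \<Longrightarrow> b' \<noteq> b"
  by (cases op; cases a; cases b; cases a'; cases b') (auto simp: infl_def)
lemma b5: "infl op a b = Both \<Longrightarrow> apply_op op (\<not>a) (\<not>b) \<noteq> apply_op op a b"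
  by (cases op; cases a; cases b) (auto simp: infl_def)
lemma b6: "infl op a b = Either \<or> infl op a b = Left \<Longrightarrow> apply_op op (\<not>a) b \<noteq> apply_op op a b"
  by (cases op; cases a; cases b) (auto simp: infl_def)
lemma b7: "infl op a b = Either \<or> infl op a b = Right \<Longrightarrow> apply_op op a (\<not>b) \<noteq> apply_op op a b"
  by (cases op; cases a; cases b) (auto simp: infl_def)
lemma b8: "infl op a b \<noteq> Pass"
  by (auto simp: infl_def Let_def)

lemma main:
  assumes "read_once \<phi>"
  shows "(\<exists>S. S \<subseteq> set (vars \<phi>) \<and> card S = depends \<sigma> \<phi> \<and> eval (flip \<sigma> S) \<phi> \<noteq> eval \<sigma> \<phi>)
       \<and> (\<forall>S. S \<subseteq> set (vars \<phi>) \<and> eval (flip \<sigma> S) \<phi> \<noteq> eval \<sigma> \<phi> \<longrightarrow> depends \<sigma> \<phi> \<le> card S)"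
  using assms
proof (induction \<phi>)
  case (Var x)
  show ?case
  proof (intro conjI allI impI)
    show "\<exists>S. S \<subseteq> set (vars (Var x)) \<and> card S = depends \<sigma> (Var x) \<and> eval (flip \<sigma> S) (Var x) \<noteq> eval \<sigma> (Var x)"
      by (rule exI[of _ "{x}"]) (auto simp: flip_def)
  next
    fix S assume "S \<subseteq> set (vars (Var x)) \<and> eval (flip \<sigma> S) (Var x) \<noteq> eval \<sigma> (Var x)"
    then have "S = {x}" by (auto simp: flip_def split: if_splits)
    then show "depends \<sigma> (Var x) \<le> card S" by simp
  qed
next
  case (Neg f)
  then show ?case by (auto simp: read_once_def)
next
  case (Bin op l r)
  let ?L = "set (vars l)" and ?R = "set (vars r)"
  have ro: "read_once l" "read_once r" and dis: "?L \<inter> ?R = {}"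
    using Bin.prems by (auto simp: read_once_def)
  obtain Sl where Sl: "Sl \<subseteq> ?L" "card Sl = depends \<sigma> l" "eval (flip \<sigma> Sl) l \<noteq> eval \<sigma> l"
    using Bin.IH(1)[OF ro(1)] by blast
  obtain Sr where Sr: "Sr \<subseteq> ?R" "card Sr = depends \<sigma> r" "eval (flip \<sigma> Sr) r \<noteq> eval \<sigma> r"
    using Bin.IH(2)[OF ro(2)] by blast
  have lbl: "\<And>S. S \<subseteq> ?L \<Longrightarrow> eval (flip \<sigma> S) l \<noteq> eval \<sigma> l \<Longrightarrow> depends \<sigma> l \<le> card S"
    using Bin.IH(1)[OF ro(1)] by blast
  have lbr: "\<And>S. S \<subseteq> ?R \<Longrightarrow> eval (flip \<sigma> S) r \<noteq> eval \<sigma> r \<Longrightarrow> depends \<sigma> r \<le> card S"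
    using Bin.IH(2)[OF ro(2)] by blast
  have restr: "\<And>S. S \<subseteq> ?L \<union> ?R \<Longrightarrow> eval (flip \<sigma> S) l = eval (flip \<sigma> (S \<inter> ?L)) l
      \<and> eval (flip \<sigma> S) r = eval (flip \<sigma> (S \<inter> ?R)) r"
    using flip_restrict by blast
  have ll: "eval (flip \<sigma> Sl) r = eval \<sigma> r"
    using flip_same[of Sl r "{}" \<sigma>] Sl(1) dis by auto
  have rr: "eval (flip \<sigma> Sr) l = eval \<sigma> l"
    using flip_same[of Sr l "{}" \<sigma>] Sr(1) dis by auto
  have lu: "eval (flip \<sigma> (Sl \<union> Sr)) l = eval (flip \<sigma> Sl) l"
    by (rule flip_same) (use Sl(1) Sr(1) dis in blast)
  have ru: "eval (flip \<sigma> (Sl \<union> Sr)) r = eval (flip \<sigma> Sr) r"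
    by (rule flip_same) (use Sl(1) Sr(1) dis in blast)
  have fin: "finite Sl" "finite Sr" using Sl(1) Sr(1) finite_subset by auto
  have cardu: "card (Sl \<union> Sr) = card Sl + card Sr"
    using fin Sl(1) Sr(1) dis by (intro card_Un_disjoint) auto
  let ?a = "eval \<sigma> l" and ?b = "eval \<sigma> r"
  have bl: "eval (flip \<sigma> Sl) l = (\<not> ?a)" using Sl(3) by auto
  have br: "eval (flip \<sigma> Sr) r = (\<not> ?b)" using Sr(3) by auto
  show ?case
  proof (intro conjI allI impI)
    show "\<exists>S. S \<subseteq> set (vars (Bin op l r)) \<and> card S = depends \<sigma> (Bin op l r) \<and>
      eval (flip \<sigma> S) (Bin op l r) \<noteq> eval \<sigma> (Bin op l r)"
    proof (cases "infl op ?a ?b")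
      case Either
      show ?thesis
      proof (cases "depends \<sigma> l \<le> depends \<sigma> r")
        case True
        then show ?thesis using Either b6[of op ?a ?b] Sl ll bl
          by (intro exI[of _ Sl]) (auto simp: Let_def)
      next
        case False
        then show ?thesis using Either b7[of op ?a ?b] Sr rr br
          by (intro exI[of _ Sr]) (auto simp: Let_def)
      qed
    next
      case Left
      then show ?thesis using b6[of op ?a ?b] Sl ll bl
        by (intro exI[of _ Sl]) (auto simp: Let_def)
    next
      case Right
      then show ?thesis using b7[of op ?a ?b] Sr rr br
        by (intro exI[of _ Sr]) (auto simp: Let_def)
    next
      case Both
      then show ?thesis using b5[of op ?a ?b] Sl Sr lu ru bl br cardu
        by (intro exI[of _ "Sl \<union> Sr"]) (auto simp: Let_def)
    next
      case Pass
      then show ?thesis using b8 by blast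
    qed
  next
    fix S assume A: "S \<subseteq> set (vars (Bin op l r)) \<and> eval (flip \<sigma> S) (Bin op l r) \<noteq> eval \<sigma> (Bin op l r)"
    then have Ssub: "S \<subseteq> ?L \<union> ?R" by simp
    have finS: "finite S" using Ssub finite_subset by blast
    have cs: "card S = card (S \<inter> ?L) + card (S \<inter> ?R)"
    proof -
      have "S = (S \<inter> ?L) \<union> (S \<inter> ?R)" using Ssub by blast
      moreover have "card ((S \<inter> ?L) \<union> (S \<inter> ?R)) = card (S \<inter> ?L) + card (S \<inter> ?R)"
        using finS dis by (intro card_Un_disjoint) auto
      ultimately show ?thesis by simp
    qed
    have ch: "apply_op op (eval (flip \<sigma> (S \<inter> ?L)) l) (eval (flip \<sigma> (S \<inter> ?R)) r) \<noteq> apply_op op ?a ?b"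
      using A restr[OF Ssub] by simp
    have CL: "eval (flip \<sigma> (S \<inter> ?L)) l \<noteq> ?a \<Longrightarrow> depends \<sigma> l \<le> card S"
      using lbl[of "S \<inter> ?L"] cs by auto
    have CR: "eval (flip \<sigma> (S \<inter> ?R)) r \<noteq> ?b \<Longrightarrow> depends \<sigma> r \<le> card S"
      using lbr[of "S \<inter> ?R"] cs by auto
    show "depends \<sigma> (Bin op l r) \<le> card S"
    proof (cases "infl op ?a ?b")
      case Either
      then show ?thesis using b1[OF ch] CL CR by (auto simp: Let_def)
    next
      case Left
      then show ?thesis using b3[OF Left ch] CL by (auto simp: Let_def)
    next
      case Right
      then show ?thesis using b4[OF Right ch] CR by (auto simp: Let_def)
    next
      case Both
      then show ?thesis using b2[OF Both ch] lbl[of "S \<inter> ?L"] lbr[of "S \<inter> ?R"] cs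
        by (auto simp: Let_def)
    next
      case Pass
      then show ?thesis using b8 by blast
    qed
  qed
qed

theorem lemma1:
  fixes \<phi> :: "'a form" and \<sigma> :: "'a \<Rightarrow> bool"
  assumes "read_once \<phi>"
  shows "depends \<sigma> \<phi> = min_flip \<sigma> \<phi>"
proof -
  from main[OF assms, of \<sigma>] obtain S0 where S0: "S0 \<subseteq> set (vars \<phi>)" "card S0 = depends \<sigma> \<phi>"
    "eval (flip \<sigma> S0) \<phi> \<noteq> eval \<sigma> \<phi>" and lb: "\<And>S. S \<subseteq> set (vars \<phi>) \<Longrightarrow> eval (flip \<sigma> S) \<phi> \<noteq> eval \<sigma> \<phi> \<Longrightarrow> depends \<sigma> \<phi> \<le> card S"
    by blast
  show ?thesis unfolding min_flip_def
    by (rule Least_equality[symmetric]) (use S0 lb in auto)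
qed

end
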